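(* Let $(R,\mathfrak{m})$ be a commutative Artinian local ring with identity and $\mathfrak{m}\neq 0$. Every polynomial of positive degree in $R[x]$ that is not a unit of $R[x]$ can be written as a product of (finitely many) irreducible polynomials of $R[x]$.
   Context: A nonunit polynomial $f\in R[x]$ is irreducible if $f=gh$ with $g,h\in R[x]$ implies $g$ or $h$ is a unit of $R[x]$. *)

theory Defs
  imports "HOL-Computational_Algebra.Polynomial" "HOL-Computational_Algebra.Factorial_Ring"
begin

definition ring_ideal :: "'a::comm_ring_1 set \<Rightarrow> bool" where
  "ring_ideal I \<longleftrightarrow> 0 \<in> I \<and> (\<forall>x\<in>I. \<forall>y\<in>I. x + y \<in> I) \<and> (\<forall>r x. x \<in> I \<longrightarrow> r * x \<in> I)"

definition maximal_ring_ideal :: "'a::comm_ring_1 set \<Rightarrow> bool" where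
  "maximal_ring_ideal M \<longleftrightarrow> ring_ideal M \<and> M \<noteq> UNIV \<and>
     (\<forall>J. ring_ideal J \<and> M \<subseteq> J \<longrightarrow> J = M \<or> J = UNIV)"

definition artinian_ring :: "'a::comm_ring_1 itself \<Rightarrow> bool" where
  "artinian_ring _ \<longleftrightarrow> (\<forall>I :: nat \<Rightarrow> 'a set. (\<forall>n. ring_ideal (I n)) \<and> (\<forall>n. I (Suc n) \<subseteq> I n)
      \<longrightarrow> (\<exists>N. \<forall>n\<ge>N. I n = I N))"

definition local_ring :: "'a::comm_ring_1 itself \<Rightarrow> bool" where
  "local_ring _ \<longleftrightarrow> (\<exists>!M :: 'a set. maximal_ring_ideal M)"

end

theory Submission
  imports Defs
begin


lemma ideal_mult: "ring_ideal I \<Longrightarrow> x \<in> I \<Longrightarrow> r * x \<in> I"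
  by (simp add: ring_ideal_def)
lemma ideal_multr: "ring_ideal I \<Longrightarrow> x \<in> I \<Longrightarrow> x * r \<in> I"
  by (metis ideal_mult mult.commute)
lemma ideal_add: "ring_ideal I \<Longrightarrow> x \<in> I \<Longrightarrow> y \<in> I \<Longrightarrow> x + y \<in> I"
  by (simp add: ring_ideal_def)
lemma ideal_0: "ring_ideal I \<Longrightarrow> 0 \<in> I"
  by (simp add: ring_ideal_def)
lemma ideal_diff: "ring_ideal I \<Longrightarrow> x \<in> I \<Longrightarrow> y \<in> I \<Longrightarrow> x - y \<in> I"
  using ideal_add[of I x "(-1) * y"] ideal_mult[of I y "-1"] by simp
lemma ideal_sum: "ring_ideal I \<Longrightarrow> (\<And>i. i \<in> S \<Longrightarrow> f i \<in> I) \<Longrightarrow> sum f S \<in> I"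
  by (induction S rule: infinite_finite_induct) (auto simp: ideal_0 ideal_add)
lemma ideal_one: "ring_ideal I \<Longrightarrow> 1 \<in> I \<Longrightarrow> I = UNIV"
  using ideal_mult[of I 1] by force

lemma exists_maximal:
  fixes I :: "'a::comm_ring_1 set"
  assumes "ring_ideal I" "1 \<notin> I"
  shows "\<exists>M. maximal_ring_ideal M \<and> I \<subseteq> M"
proof -
  let ?A = "{J. ring_ideal J \<and> I \<subseteq> J \<and> 1 \<notin> J}"
  have "\<forall>C\<in>chains ?A. \<exists>U\<in>?A. \<forall>X\<in>C. X \<subseteq> U"
  proof
    fix C assume C: "C \<in> chains ?A"
    show "\<exists>U\<in>?A. \<forall>X\<in>C. X \<subseteq> U"
    proof (cases "C = {}")
      case True then show ?thesis using assms by auto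
    next
      case False
      have sub: "C \<subseteq> ?A" and ch: "\<forall>X\<in>C. \<forall>Y\<in>C. X \<subseteq> Y \<or> Y \<subseteq> X"
        using C unfolding chains_def chain_subset_def by auto
      have "ring_ideal (\<Union>C)"
        unfolding ring_ideal_def
      proof (intro conjI ballI allI impI)
        show "0 \<in> \<Union>C" using False sub ideal_0 by blast
      next
        fix x y assume "x \<in> \<Union>C" "y \<in> \<Union>C"
        then obtain X Y where XY: "X \<in> C" "Y \<in> C" "x \<in> X" "y \<in> Y" by auto
        then consider "X \<subseteq> Y" | "Y \<subseteq> X" using ch by blast
        then show "x + y \<in> \<Union>C"
          by cases (use XY sub ideal_add in blast)+
      next
        fix r x assume "x \<in> \<Union>C"
        then show "r * x \<in> \<Union>C" using sub ideal_mult by blast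
      qed
      then have "\<Union>C \<in> ?A" using False sub by auto
      then show ?thesis by blast
    qed
  qed
  then obtain M where M: "M \<in> ?A" "\<forall>X\<in>?A. M \<subseteq> X \<longrightarrow> X = M"
    using Zorn_Lemma2[of ?A] by blast
  have "maximal_ring_ideal M"
    unfolding maximal_ring_ideal_def
  proof (intro conjI allI impI)
    show "ring_ideal M" using M by auto
    show "M \<noteq> UNIV" using M by auto
    fix J assume J: "ring_ideal J \<and> M \<subseteq> J"
    show "J = M \<or> J = UNIV"
    proof (cases "1 \<in> J")
      case True then show ?thesis using J ideal_one by blast
    next
      case False then show ?thesis using J M by auto
    qed
  qed
  then show ?thesis using M by auto
qed

lemma nonunit_in_m:
  fixes m :: "'a::comm_ring_1 set"
  assumes loc: "local_ring TYPE('a)" and m: "maximal_ring_ideal m"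
  shows "x \<in> m \<longleftrightarrow> \<not> x dvd 1"
proof
  assume "x \<in> m"
  show "\<not> x dvd 1"
  proof
    assume "x dvd 1"
    then obtain y where "1 = x * y" by (auto simp: dvd_def)
    then have "1 \<in> m" using \<open>x \<in> m\<close> m ideal_multr unfolding maximal_ring_ideal_def by metis
    then show False using m ideal_one unfolding maximal_ring_ideal_def by blast
  qed
next
  assume nx: "\<not> x dvd 1"
  let ?I = "{r * x | r. True}"
  have "ring_ideal ?I" unfolding ring_ideal_def
  proof (intro conjI ballI allI impI)
    show "0 \<in> ?I" by (rule CollectI, rule exI[of _ 0]) simp
  next
    fix a b assume "a \<in> ?I" "b \<in> ?I"
    then obtain r s where "a = r * x" "b = s * x" by blast
    then have "a + b = (r + s) * x" by (simp add: distrib_right)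
    then show "a + b \<in> ?I" by blast
  next
    fix r a assume "a \<in> ?I"
    then obtain s where "a = s * x" by blast
    then have "r * a = (r * s) * x" by (simp add: mult.assoc)
    then show "r * a \<in> ?I" by blast
  qed
  moreover have "1 \<notin> ?I"
  proof
    assume "1 \<in> ?I"
    then obtain r where "1 = r * x" by blast
    then have "x dvd 1" by (metis dvd_triv_right)
    then show False using nx by simp
  qed
  ultimately obtain M where "maximal_ring_ideal M" "?I \<subseteq> M" using exists_maximal by blast
  moreover have "M = m" using loc m \<open>maximal_ring_ideal M\<close> unfolding local_ring_def by blast
  moreover have "x \<in> ?I" by (rule CollectI, rule exI[of _ 1]) simp
  ultimately show "x \<in> m" by blast
qed



inductive mp :: "'a::comm_ring_1 set \<Rightarrow> nat \<Rightarrow> 'a \<Rightarrow> bool" for m where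
  mp0: "mp m 0 x"
| mpz: "mp m (Suc j) 0"
| mpm: "a \<in> m \<Longrightarrow> mp m j x \<Longrightarrow> mp m (Suc j) (a * x)"
| mpa: "mp m (Suc j) x \<Longrightarrow> mp m (Suc j) y \<Longrightarrow> mp m (Suc j) (x + y)"

lemma mp_ideal:
  assumes "ring_ideal m" shows "ring_ideal {x. mp m j x}"
  unfolding ring_ideal_def
proof (intro conjI ballI allI impI)
  show "0 \<in> {x. mp m j x}" by (cases j) (simp_all add: mp.mp0 mp.mpz)
next
  fix x y assume "x \<in> {x. mp m j x}" "y \<in> {x. mp m j x}"
  then show "x + y \<in> {x. mp m j x}" by (cases j) (simp_all add: mp.mp0 mp.mpa)
next
  fix r x assume "x \<in> {x. mp m j x}"
  then have "mp m j x" by simp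
  then have "mp m j (r * x)"
  proof (induction rule: mp.induct)
    case (mp0 x) then show ?case by (rule mp.mp0)
  next
    case (mpz j) then show ?case by (simp add: mp.mpz)
  next
    case (mpm a j x)
    have "r * (a * x) = (r * a) * x" by (simp add: mult.assoc)
    moreover have "r * a \<in> m" using assms mpm(1) ideal_mult by blast
    ultimately show ?case using mpm(2) mp.mpm by metis
  next
    case (mpa j x y) then show ?case by (simp add: distrib_left mp.mpa)
  qed
  then show "r * x \<in> {x. mp m j x}" by simp
qed

lemma mp_mult_left: "ring_ideal m \<Longrightarrow> mp m j x \<Longrightarrow> mp m j (r * x)"
  using mp_ideal[of m j] ideal_mult by blast
lemma mp_add: "ring_ideal m \<Longrightarrow> mp m j x \<Longrightarrow> mp m j y \<Longrightarrow> mp m j (x + y)"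
  using mp_ideal[of m j] ideal_add by blast
lemma mp_zero: "ring_ideal m \<Longrightarrow> mp m j 0"
  using mp_ideal[of m j] ideal_0 by blast

lemma mp_anti_aux: "mp m n x \<Longrightarrow> n = Suc j \<Longrightarrow> mp m j x"
proof (induction arbitrary: j rule: mp.induct)
  case (mp0 x) then show ?case by simp
next
  case (mpz j') then show ?case by (cases j) (simp_all add: mp.mp0 mp.mpz)
next
  case (mpm a j' x)
  show ?case
  proof (cases j')
    case 0 then show ?thesis using mpm by (simp add: mp.mp0)
  next
    case (Suc j'')
    then have "mp m j'' x" using mpm.IH by blast
    then have "mp m (Suc j'') (a * x)" using mpm.hyps(1) by (rule mp.mpm[rotated])
    then show ?thesis using mpm.prems Suc by simp
  qed
next
  case (mpa j' x y)
  then have "mp m j x" "mp m j y" by blast+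
  then show ?case by (cases j) (simp_all add: mp.mp0 mp.mpa)
qed

lemma mp_anti: "mp m (Suc j) x \<Longrightarrow> mp m j x"
  using mp_anti_aux by blast

lemma mp_mono: "j \<le> j' \<Longrightarrow> mp m j' x \<Longrightarrow> mp m j x"
proof (induction j' rule: dec_induct)
  case base then show ?case .
next
  case (step n) then show ?case using mp_anti by blast
qed

lemma mp_pos_in_m: assumes im: "ring_ideal m" and h: "mp m n x" and "n > 0" shows "x \<in> m"
  using h \<open>n > 0\<close>
proof (induction rule: mp.induct)
  case (mpz j) then show ?case by (simp add: ideal_0 im)
next
  case (mpm a j x) then show ?case by (simp add: ideal_multr im)
next
  case (mpa j x y) then show ?case by (simp add: ideal_add im)
qed simp

lemma mp_one: "ring_ideal m \<Longrightarrow> mp m (Suc 0) x \<longleftrightarrow> x \<in> m"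
proof
  assume "ring_ideal m" "mp m (Suc 0) x" then show "x \<in> m" using mp_pos_in_m by blast
next
  assume "x \<in> m" then show "mp m (Suc 0) x" using mp.mpm[of x m 0 1] mp.mp0[of m 1] by simp
qed

lemma mp_mult: assumes im: "ring_ideal m" and h: "mp m a x" and hy: "mp m b y" shows "mp m (a + b) (x * y)"
  using h
proof (induction rule: mp.induct)
  case (mp0 x) then show ?case using hy im by (simp add: mp_mult_left)
next
  case (mpz j) then show ?case by (simp add: mp.mpz)
next
  case (mpm a' j x)
  then have "mp m (Suc (j + b)) (a' * (x * y))" using hy by (simp add: mp.mpm)
  then show ?case by (simp add: mult.assoc)
next
  case (mpa j x y')
  then show ?case by (simp add: distrib_right mp_add im)
qed

lemma one_minus_unit:
  fixes m :: "'a::comm_ring_1 set"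
  assumes loc: "local_ring TYPE('a)" and m: "maximal_ring_ideal m" and y: "y \<in> m"
  shows "(1 - y) dvd 1"
proof -
  have im: "ring_ideal m" using m by (simp add: maximal_ring_ideal_def)
  have "1 \<notin> m" using m ideal_one unfolding maximal_ring_ideal_def by blast
  then have "1 - y \<notin> m" using ideal_add[OF im _ y, of "1 - y"] by auto
  then show ?thesis using nonunit_in_m[OF loc m] by blast
qed

lemma dcc_minimal:
  fixes F :: "'a::comm_ring_1 set set"
  assumes art: "artinian_ring TYPE('a)" and J: "J \<in> F" and FI: "\<forall>J\<in>F. ring_ideal J"
  shows "\<exists>J0\<in>F. \<forall>J\<in>F. J \<subseteq> J0 \<longrightarrow> J = J0"
proof (rule ccontr)
  assume "\<not> ?thesis"
  then have H: "\<forall>X\<in>F. \<exists>Y. Y \<in> F \<and> Y \<subseteq> X \<and> Y \<noteq> X" by blast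
  define c where "c = rec_nat J (\<lambda>_ X. SOME Y. Y \<in> F \<and> Y \<subseteq> X \<and> Y \<noteq> X)"
  have c0: "c 0 = J" and cS: "\<And>n. c (Suc n) = (SOME Y. Y \<in> F \<and> Y \<subseteq> c n \<and> Y \<noteq> c n)"
    by (simp_all add: c_def)
  have cF: "c n \<in> F" for n
  proof (induction n)
    case 0 then show ?case using J c0 by simp
  next
    case (Suc n)
    from someI_ex[OF H[rule_format, OF Suc]] show ?case by (simp add: cS)
  qed
  have cstep: "c (Suc n) \<subseteq> c n \<and> c (Suc n) \<noteq> c n" for n
    using someI_ex[OF H[rule_format, OF cF[of n]]] by (simp add: cS)
  have "(\<forall>n. ring_ideal (c n)) \<and> (\<forall>n. c (Suc n) \<subseteq> c n)"
    using cF FI cstep by blast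
  then have "\<exists>N. \<forall>n\<ge>N. c n = c N"
    using art[unfolded artinian_ring_def, rule_format, of c] by blast
  then obtain N where "\<forall>n\<ge>N. c n = c N" by blast
  moreover have "N \<le> Suc N" by simp
  ultimately have "c (Suc N) = c N" by blast
  then show False using cstep by blast
qed

lemma stepdown: "mp m n i \<Longrightarrow> n = Suc N \<Longrightarrow> i * a \<noteq> 0 \<Longrightarrow> \<exists>y\<in>m. \<exists>i'. mp m N i' \<and> i' * (y * a) \<noteq> 0"
proof (induction rule: mp.induct)
  case (mpm a' j x)
  have "x * (a' * a) \<noteq> 0" using mpm.prems by (simp add: ac_simps)
  moreover have "mp m N x" using mpm by auto
  ultimately show ?case using mpm(1) by blast
next
  case (mpa j x y)
  have "x * a \<noteq> 0 \<or> y * a \<noteq> 0" using mpa.prems by (auto simp: distrib_right)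
  then show ?case using mpa.IH mpa.prems by blast
qed auto

lemma m_nilpotent:
  fixes m :: "'a::comm_ring_1 set"
  assumes art: "artinian_ring TYPE('a)" and loc: "local_ring TYPE('a)" and m: "maximal_ring_ideal m"
  shows "\<exists>k. \<forall>x. mp m k x \<longrightarrow> x = 0"
proof -
  have im: "ring_ideal m" using m by (simp add: maximal_ring_ideal_def)
  have "(\<forall>n. ring_ideal {x. mp m n x}) \<and> (\<forall>n. {x. mp m (Suc n) x} \<subseteq> {x. mp m n x})"
    using mp_ideal[OF im] mp_anti by blast
  then have "\<exists>N. \<forall>n\<ge>N. {x. mp m n x} = {x. mp m N x}"
    using art[unfolded artinian_ring_def, rule_format, of "\<lambda>n. {x. mp m n x}"] by blast
  then obtain N where "\<forall>n\<ge>N. {x. mp m n x} = {x. mp m N x}" by blast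
  then have eqS: "mp m (Suc N) x \<longleftrightarrow> mp m N x" for x
  proof -
    have "N \<le> Suc N" by simp
    then have "{x. mp m (Suc N) x} = {x. mp m N x}" using \<open>\<forall>n\<ge>N. _\<close> by blast
    then show ?thesis by blast
  qed
  show ?thesis
  proof (rule exI[of _ N], rule ccontr)
    assume "\<not> (\<forall>x. mp m N x \<longrightarrow> x = 0)"
    then obtain i0 where i0: "mp m N i0" "i0 \<noteq> 0" by blast
    define F where "F = {J. ring_ideal J \<and> (\<exists>i a. mp m N i \<and> a \<in> J \<and> i * a \<noteq> 0)}"
    have "ring_ideal (UNIV :: 'a set)" unfolding ring_ideal_def by simp
    moreover have "mp m N i0 \<and> 1 \<in> (UNIV :: 'a set) \<and> i0 * 1 \<noteq> 0" using i0 by simp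
    ultimately have "UNIV \<in> F" unfolding F_def by blast
    moreover have "\<forall>J\<in>F. ring_ideal J" by (simp add: F_def)
    ultimately obtain J0 where J0: "J0 \<in> F" "\<forall>J\<in>F. J \<subseteq> J0 \<longrightarrow> J = J0"
      using dcc_minimal[OF art] by blast
    then obtain i a where ia: "mp m N i" "a \<in> J0" "i * a \<noteq> 0" and J0i: "ring_ideal J0"
      by (auto simp: F_def)
    obtain y i' where y: "y \<in> m" "mp m N i'" "i' * (y * a) \<noteq> 0"
      using stepdown[of m "Suc N" i N a] ia eqS by blast
    define K where "K = {r * (y * a) | r. True}"
    have Kid: "ring_ideal K" unfolding ring_ideal_def K_def
    proof (intro conjI ballI allI impI)
      show "0 \<in> {r * (y * a) |r. True}" by (rule CollectI, rule exI[of _ 0]) simp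
    next
      fix u v assume "u \<in> {r * (y * a) |r. True}" "v \<in> {r * (y * a) |r. True}"
      then obtain r s where "u = r * (y * a)" "v = s * (y * a)" by blast
      then have "u + v = (r + s) * (y * a)" by (simp add: distrib_right)
      then show "u + v \<in> {r * (y * a) |r. True}" by blast
    next
      fix r u assume "u \<in> {r * (y * a) |r. True}"
      then obtain s where "u = s * (y * a)" by blast
      then have "r * u = (r * s) * (y * a)" by (simp add: mult.assoc)
      then show "r * u \<in> {r * (y * a) |r. True}" by blast
    qed
    have "y * a \<in> K" unfolding K_def by (rule CollectI, rule exI[of _ 1]) simp
    then have "K \<in> F" using Kid y unfolding F_def by blast
    moreover have "K \<subseteq> J0"
    proof
      fix u assume "u \<in> K"
      then obtain r where "u = r * (y * a)" unfolding K_def by blast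
      then show "u \<in> J0" using ideal_mult[OF J0i ia(2), of "r * y"] by (simp add: mult.assoc)
    qed
    ultimately have "K = J0" using J0 by blast
    then have "a \<in> K" using ia by simp
    then obtain r where r: "a = r * (y * a)" unfolding K_def by blast
    have "r * y \<in> m" using y(1) im ideal_mult by blast
    then have u: "(1 - r * y) dvd 1" using one_minus_unit[OF loc m] by blast
    have r': "r * (y * a) = a" using r by (rule sym)
    have "a * (1 - r * y) = a - r * (y * a)" by (simp add: algebra_simps)
    also have "\<dots> = 0" by (simp only: r' diff_self)
    finally have "a * (1 - r * y) = 0" .
    note z = this
    obtain v where v: "1 = (1 - r * y) * v" using u by (auto elim: dvdE)
    have "a = a * ((1 - r * y) * v)" by (simp only: v[symmetric] mult_1_right)
    also have "\<dots> = (a * (1 - r * y)) * v" by (simp only: mult.assoc)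
    also have "\<dots> = 0" by (simp only: z mult_zero_left)
    finally have "a = 0" .
    then show False using ia by simp
  qed
qed



definition pin :: "'a::comm_ring_1 set \<Rightarrow> nat \<Rightarrow> 'a poly \<Rightarrow> bool" where
  "pin m j f \<longleftrightarrow> (\<forall>i. mp m j (coeff f i))"

definition lv :: "'a::comm_ring_1 set \<Rightarrow> 'a poly \<Rightarrow> nat \<Rightarrow> nat \<Rightarrow> bool" where
  "lv m f j e \<longleftrightarrow> pin m j f \<and> \<not> mp m (Suc j) (coeff f e) \<and> (\<forall>i>e. mp m (Suc j) (coeff f i))"

definition fac :: "'a::comm_ring_1 poly \<Rightarrow> bool" where
  "fac f \<longleftrightarrow> (\<exists>fs. (\<forall>g\<in>set fs. irreducible g) \<and> f = prod_list fs)"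

locale artloc =
  fixes m :: "'a::comm_ring_1 set" and k :: nat
  assumes im: "ring_ideal m" and nil: "\<forall>x. mp m k x \<longrightarrow> x = 0"
    and units: "\<forall>x. x \<notin> m \<longrightarrow> x dvd 1"
begin

lemma mp_sum: "(\<And>i. i \<in> S \<Longrightarrow> mp m j (f i)) \<Longrightarrow> mp m j (sum f S)"
  using ideal_sum[OF mp_ideal[OF im, of j], of S f] by simp

lemma pin_mult: "pin m a g \<Longrightarrow> pin m b h \<Longrightarrow> pin m (a + b) (g * h)"
  unfolding pin_def coeff_mult by (auto intro!: mp_sum mp_mult[OF im])

lemma pin_mono: "j \<le> j' \<Longrightarrow> pin m j' f \<Longrightarrow> pin m j f"
  unfolding pin_def using mp_mono by blast

lemma lv_nonzero: "lv m f j e \<Longrightarrow> f \<noteq> 0"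
  unfolding lv_def using mp_zero[OF im] by auto

lemma lv_unique: assumes "lv m f j e" "lv m f j' e'" shows "j = j' \<and> e = e'"
proof -
  have jj: "j = j'"
  proof (rule ccontr)
    assume "j \<noteq> j'"
    then consider "j < j'" | "j' < j" by linarith
    then show False
    proof cases
      case 1
      then have "pin m (Suc j) f" using assms(2) pin_mono[of "Suc j" j'] unfolding lv_def by simp
      then show False using assms(1) unfolding lv_def pin_def by blast
    next
      case 2
      then have "pin m (Suc j') f" using assms(1) pin_mono[of "Suc j'" j] unfolding lv_def by simp
      then show False using assms(2) unfolding lv_def pin_def by blast
    qed
  qed
  moreover have "e = e'"
  proof (rule ccontr)
    assume "e \<noteq> e'"
    then consider "e < e'" | "e' < e" by linarith
    then show False using assms jj unfolding lv_def by cases blast+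
  qed
  ultimately show ?thesis by simp
qed

lemma lv_exists: assumes "f \<noteq> 0" shows "\<exists>j e. lv m f j e"
proof -
  have ex: "\<exists>j. \<not> pin m (Suc j) f"
  proof
    show "\<not> pin m (Suc k) f"
    proof
      assume "pin m (Suc k) f"
      then have "pin m k f" using pin_mono[of k "Suc k"] by simp
      then have "\<forall>i. coeff f i = 0" using nil unfolding pin_def by blast
      then show False using assms by (simp add: poly_eq_iff)
    qed
  qed
  define j where "j = (LEAST j. \<not> pin m (Suc j) f)"
  have j1: "\<not> pin m (Suc j) f" unfolding j_def by (rule LeastI_ex[OF ex])
  have j2: "pin m j f"
  proof (cases j)
    case 0 then show ?thesis by (simp add: pin_def mp.mp0)
  next
    case (Suc j')
    then have "j' < j" by simp
    then have "pin m (Suc j') f" unfolding j_def using not_less_Least by blast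
    then show ?thesis using Suc by simp
  qed
  define S where "S = {i. \<not> mp m (Suc j) (coeff f i)}"
  obtain i0 where "\<not> mp m (Suc j) (coeff f i0)" using j1 unfolding pin_def by blast
  then have "i0 \<in> S" unfolding S_def by simp
  then have Sne: "S \<noteq> {}" by blast
  have Ssub: "S \<subseteq> {..degree f}"
  proof
    fix i assume "i \<in> S"
    show "i \<in> {..degree f}"
    proof (rule ccontr)
      assume "i \<notin> {..degree f}"
      then have "coeff f i = 0" by (simp add: coeff_eq_0 not_le)
      then show False using \<open>i \<in> S\<close> mp_zero[OF im] unfolding S_def by simp
    qed
  qed
  have Sfin: "finite S" by (rule finite_subset[OF Ssub]) simp
  have M1: "Max S \<in> S" by (rule Max_in[OF Sfin Sne])
  have M2: "mp m (Suc j) (coeff f i)" if "i > Max S" for i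
  proof (rule ccontr)
    assume "\<not> mp m (Suc j) (coeff f i)"
    then have "i \<in> S" unfolding S_def by simp
    then have "i \<le> Max S" by (rule Max_ge[OF Sfin])
    then show False using that by simp
  qed
  have "lv m f j (Max S)" unfolding lv_def using j2 M1 M2 unfolding S_def by blast
  then show ?thesis by blast
qed

lemma term_high:
  assumes g: "lv m g a p" and h: "lv m h b q" and "i > p \<or> n - i > q"
  shows "mp m (Suc (a + b)) (coeff g i * coeff h (n - i))"
  using assms(3)
proof
  assume "i > p"
  then have "mp m (Suc a) (coeff g i)" using g unfolding lv_def by blast
  moreover have "mp m b (coeff h (n - i))" using h unfolding lv_def pin_def by blast
  ultimately show ?thesis using mp_mult[OF im] by fastforce
next
  assume "n - i > q"
  then have "mp m (Suc b) (coeff h (n - i))" using h unfolding lv_def by blast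
  moreover have "mp m a (coeff g i)" using g unfolding lv_def pin_def by blast
  ultimately show ?thesis using mp_mult[OF im] by fastforce
qed

lemma lv_mult:
  assumes g: "lv m g a p" and h: "lv m h b q" and ab: "a = 0 \<or> b = 0"
  shows "lv m (g * h) (a + b) (p + q)"
proof -
  have pin: "pin m (a + b) (g * h)" using pin_mult g h unfolding lv_def by blast
  have high: "mp m (Suc (a + b)) (coeff (g * h) n)" if "n > p + q" for n
    unfolding coeff_mult
    by (rule mp_sum, rule term_high[OF g h]) (use that in auto)
  have top: "\<not> mp m (Suc (a + b)) (coeff (g * h) (p + q))"
  proof
    assume A: "mp m (Suc (a + b)) (coeff (g * h) (p + q))"
    let ?n = "p + q"
    have "coeff (g * h) ?n = coeff g p * coeff h q + (\<Sum>i\<in>{..?n} - {p}. coeff g i * coeff h (?n - i))"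
      unfolding coeff_mult by (subst sum.remove[of _ p]) auto
    moreover have "mp m (Suc (a + b)) (\<Sum>i\<in>{..?n} - {p}. coeff g i * coeff h (?n - i))"
      by (rule mp_sum, rule term_high[OF g h]) auto
    ultimately have P: "mp m (Suc (a + b)) (coeff g p * coeff h q)"
      using A mp_ideal[OF im, of "Suc (a + b)"] ideal_diff
      by (metis (no_types, lifting) add_diff_cancel_right' mem_Collect_eq)
    from ab show False
    proof
      assume "b = 0"
      then have "coeff h q \<notin> m" using h mp_one[OF im] unfolding lv_def by simp
      then have "coeff h q dvd 1" using units by blast
      then obtain v where v: "1 = coeff h q * v" by (rule dvdE)
      have P': "mp m (Suc a) (coeff g p * coeff h q)" using P \<open>b = 0\<close> by simp
      have "mp m (Suc a) (v * (coeff g p * coeff h q))" by (rule mp_mult_left[OF im P'])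
      moreover have "v * (coeff g p * coeff h q) = coeff g p * (coeff h q * v)" by (simp only: ac_simps)
      moreover have "\<dots> = coeff g p" by (simp only: v[symmetric] mult_1_right)
      ultimately have "mp m (Suc a) (coeff g p)" by simp
      then show False using g unfolding lv_def by blast
    next
      assume "a = 0"
      then have "coeff g p \<notin> m" using g mp_one[OF im] unfolding lv_def by simp
      then have "coeff g p dvd 1" using units by blast
      then obtain v where v: "1 = coeff g p * v" by (rule dvdE)
      have P': "mp m (Suc b) (coeff g p * coeff h q)" using P \<open>a = 0\<close> by simp
      have "mp m (Suc b) (v * (coeff g p * coeff h q))" by (rule mp_mult_left[OF im P'])
      moreover have "v * (coeff g p * coeff h q) = coeff h q * (coeff g p * v)" by (simp only: ac_simps)
      moreover have "\<dots> = coeff h q" by (simp only: v[symmetric] mult_1_right)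
      ultimately have "mp m (Suc b) (coeff h q)" by simp
      then show False using h unfolding lv_def by blast
    qed
  qed
  show ?thesis unfolding lv_def using pin high top by blast
qed

lemma lv00_unit: assumes "lv m h 0 0" shows "h dvd 1"
proof -
  have h0: "coeff h 0 \<notin> m" using assms mp_one[OF im] unfolding lv_def by simp
  then have "coeff h 0 dvd 1" using units by blast
  then obtain v where v: "1 = coeff h 0 * v" by (rule dvdE)
  define n where "n = h - [:coeff h 0:]"
  have pn: "pin m 1 n" unfolding pin_def
  proof
    fix i show "mp m 1 (coeff n i)"
    proof (cases i)
      case 0 then show ?thesis by (simp add: n_def mp_zero[OF im])
    next
      case (Suc i')
      then have "i > 0" by simp
      then have "mp m (Suc 0) (coeff h i)" using assms unfolding lv_def by simp
      then show ?thesis using Suc by (simp add: n_def coeff_pCons)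
    qed
  qed
  have pw: "pin m j (n ^ j)" for j
  proof (induction j)
    case 0 then show ?case by (simp add: pin_def mp.mp0)
  next
    case (Suc j)
    have "pin m (1 + j) (n * n ^ j)" by (rule pin_mult[OF pn Suc])
    then show ?case by simp
  qed
  have "\<forall>i. coeff (n ^ k) i = 0" using pw[of k] nil unfolding pin_def by blast
  then have nk: "n ^ k = 0" by (simp add: poly_eq_iff)
  define w where "w = [:v:] * n"
  have wk: "w ^ k = 0" unfolding w_def power_mult_distrib nk by simp
  have hn: "h = [:coeff h 0:] + n" unfolding n_def by simp
  have vc: "v * coeff h 0 = 1" using v by (simp only: mult.commute)
  have "[:v:] * h = [:v:] * [:coeff h 0:] + w" unfolding w_def by (subst hn, simp only: distrib_left)
  also have "[:v:] * [:coeff h 0:] = [:v * coeff h 0:]" by simp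
  also have "\<dots> = 1" by (simp only: vc pCons_one)
  finally have vh: "[:v:] * h = 1 + w" .
  have "1 - (- w) ^ k = (1 - - w) * (\<Sum>i<k. (- w) ^ i)" by (rule one_diff_power_eq)
  moreover have "(- w) ^ k = 0" by (simp only: power_minus[of w] wk mult_zero_right)
  ultimately have "(1 + w) * (\<Sum>i<k. (- w) ^ i) = 1" by simp
  then have "([:v:] * h) dvd 1" unfolding vh by (rule dvdI[OF sym])
  then show ?thesis by (rule dvd_mult_right)
qed

lemma main_ind: "\<forall>e f. lv m f j e \<longrightarrow> \<not> f dvd 1 \<longrightarrow> fac f"
proof (induction j rule: less_induct)
  case (less j)
  note IHj = less.IH
  show ?case
  proof (rule allI)
    fix e show "\<forall>f. lv m f j e \<longrightarrow> \<not> f dvd 1 \<longrightarrow> fac f"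
    proof (induction e rule: less_induct)
      case (less e)
      note IHe = less.IH
      show ?case
      proof (intro allI impI)
        fix f assume f: "lv m f j e" "\<not> f dvd 1"
        show "fac f"
        proof (cases "irreducible f")
          case True then show ?thesis unfolding fac_def by (intro exI[of _ "[f]"]) simp
        next
          case False
          have "f \<noteq> 0" using lv_nonzero f(1) .
          then obtain g h where gh: "f = g * h" "\<not> g dvd 1" "\<not> h dvd 1"
            using False f(2) unfolding irreducible_def by blast
          have "g \<noteq> 0" "h \<noteq> 0" using gh \<open>f \<noteq> 0\<close> by auto
          obtain a p where g: "lv m g a p" using lv_exists \<open>g \<noteq> 0\<close> by blast
          obtain b q where h: "lv m h b q" using lv_exists \<open>h \<noteq> 0\<close> by blast
          have pf: "pin m (a + b) f" using pin_mult g h gh(1) unfolding lv_def by blast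
          have abj: "a + b \<le> j"
          proof (rule ccontr)
            assume "\<not> a + b \<le> j"
            then have "pin m (Suc j) f" using pin_mono[OF _ pf, of "Suc j"] by simp
            then show False using f(1) unfolding lv_def pin_def by blast
          qed
          have fg: "fac g"
          proof (cases "b = 0")
            case True
            then have "lv m f (a + b) (p + q)" using lv_mult[OF g h] gh(1) by simp
            then have je: "j = a + b \<and> e = p + q" using lv_unique f(1) by blast
            moreover have "q \<noteq> 0"
            proof
              assume "q = 0" then have "lv m h 0 0" using h True by simp
              then show False using lv00_unit gh(3) by blast
            qed
            ultimately have "a = j" "p < e" using True by auto
            then show ?thesis using IHe g gh(2) by blast
          next
            case False
            then have "a < j" using abj by simp
            then show ?thesis using IHj g gh(2) by blast
          qed
          have fh: "fac h"
          proof (cases "a = 0")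
            case True
            then have "lv m f (a + b) (p + q)" using lv_mult[OF g h] gh(1) by simp
            then have je: "j = a + b \<and> e = p + q" using lv_unique f(1) by blast
            moreover have "p \<noteq> 0"
            proof
              assume "p = 0" then have "lv m g 0 0" using g True by simp
              then show False using lv00_unit gh(2) by blast
            qed
            ultimately have "b = j" "q < e" using True by auto
            then show ?thesis using IHe h gh(3) by blast
          next
            case False
            then have "b < j" using abj by simp
            then show ?thesis using IHj h gh(3) by blast
          qed
          obtain gs where gs: "\<forall>x\<in>set gs. irreducible x" "g = prod_list gs" using fg unfolding fac_def by blast
          obtain hs where hs: "\<forall>x\<in>set hs. irreducible x" "h = prod_list hs" using fh unfolding fac_def by blast
          have "\<forall>x\<in>set (gs @ hs). irreducible x" using gs(1) hs(1) unfolding set_append by blast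
          moreover have "f = prod_list (gs @ hs)" using gs(2) hs(2) gh(1) by simp
          ultimately show ?thesis unfolding fac_def by blast
        qed
      qed
    qed
  qed
qed

end

theorem proposition3p1:
  fixes m :: "'a::comm_ring_1 set" and f :: "'a poly"
  assumes "artinian_ring TYPE('a)"
    and "local_ring TYPE('a)"
    and "maximal_ring_ideal m"
    and "m \<noteq> {0}"
    and "degree f > 0"
    and "\<not> f dvd 1"
  shows "\<exists>fs :: 'a poly list. (\<forall>g\<in>set fs. irreducible g) \<and> f = prod_list fs"
proof -
  have im: "ring_ideal m" using assms(3) by (simp add: maximal_ring_ideal_def)
  obtain k where k: "\<forall>x. mp m k x \<longrightarrow> x = 0" using m_nilpotent[OF assms(1-3)] by blast
  have u: "\<forall>x. x \<notin> m \<longrightarrow> x dvd 1" using nonunit_in_m[OF assms(2,3)] by blast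
  interpret artloc m k using im k u by unfold_locales
  have "f \<noteq> 0" using assms(5) by auto
  then obtain j e where "lv m f j e" using lv_exists by blast
  then have "fac f" using main_ind assms(6) by blast
  then show ?thesis unfolding fac_def .
qed

end
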